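(* Let $g\in\mathcal P$ be continuously differentiable on $(a_g,b_g)$, let $\alpha\in[0,1)$ and assume $g'(x)<\alpha$ for all $x\in(a_g,b_g)$. Then $\mathrm{gr}(g)$ is stable under the shaking $\mathrm{Sh}_\alpha$, i.e. $\mathrm{Sh}_\alpha(\mathrm{gr}(g))=\mathrm{gr}(g)$.
   Context: $\mathcal P$ is the set of continuous $g:\mathbb R\to\mathbb R$ with $g(x)\ge|x|$ for all $x$, $g(x)=|x|$ for $|x|$ large, and $g(x_0)\ne|x_0|$ for some $x_0$. For $g\in\mathcal P$: $a_g=\inf\{x:g(x)\ne|x|\}$, $b_g=\sup\{x:g(x)\ne|x|\}$, $\mathrm{gr}(g)=\{(x,y)\in[a_g,b_g]\times\mathbb R_{\ge0}:|x|\le y\le g(x)\}$. Shaking of sets: let $D$ be the line $y=-x$ and $v_\alpha$ the unit vector positively collinear to $(1,\alpha)$. For compact $K\subseteq\mathbb R^2$, $\mathrm{Sh}_\alpha(K)=\bigcup_{p\in D}K^p$, where $K^p=\emptyset$ if $K\cap(p+\mathbb Rv_\alpha)=\emptyset$ and otherwise $K^p$ is the segment from $p$ to $p+|K\cap(p+\mathbb Rv_\alpha)|\,v_\alpha$, with $|\cdot|$ the one-dimensional Lebesgue measure on the line. *)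

theory Defs
  imports "HOL-Analysis.Analysis"
begin

definition classP :: "(real \<Rightarrow> real) set" where
  "classP = {g. continuous_on UNIV g \<and> (\<forall>x. g x \<ge> \<bar>x\<bar>)
      \<and> (\<exists>R. \<forall>x. \<bar>x\<bar> \<ge> R \<longrightarrow> g x = \<bar>x\<bar>)
      \<and> (\<exists>x0. g x0 \<noteq> \<bar>x0\<bar>)}"

definition a_of :: "(real \<Rightarrow> real) \<Rightarrow> real" where
  "a_of g = Inf {x. g x \<noteq> \<bar>x\<bar>}"

definition b_of :: "(real \<Rightarrow> real) \<Rightarrow> real" where
  "b_of g = Sup {x. g x \<noteq> \<bar>x\<bar>}"

definition gr :: "(real \<Rightarrow> real) \<Rightarrow> (real \<times> real) set" where
  "gr g = {(x, y). a_of g \<le> x \<and> x \<le> b_of g \<and> 0 \<le> y \<and> \<bar>x\<bar> \<le> y \<and> y \<le> g x}"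

definition lineD :: "(real \<times> real) set" where
  "lineD = {p. snd p = - fst p}"

definition vdir :: "real \<Rightarrow> real \<times> real" where
  "vdir \<alpha> = (1 / sqrt (1 + \<alpha>\<^sup>2)) *\<^sub>R (1, \<alpha>)"

text \<open>One-dimensional Lebesgue measure of K on the line p + R v (v a unit vector),
  computed through the arc-length parametrisation t \<mapsto> p + t v.\<close>
definition fiber_len :: "(real \<times> real) set \<Rightarrow> real \<Rightarrow> real \<times> real \<Rightarrow> real" where
  "fiber_len K \<alpha> p = measure lborel {t::real. p + t *\<^sub>R vdir \<alpha> \<in> K}"

definition fiber :: "(real \<times> real) set \<Rightarrow> real \<Rightarrow> real \<times> real \<Rightarrow> (real \<times> real) set" where
  "fiber K \<alpha> p =
     (if K \<inter> {p + t *\<^sub>R vdir \<alpha> | t. True} = {} then {}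
      else closed_segment p (p + fiber_len K \<alpha> p *\<^sub>R vdir \<alpha>))"

definition shaking :: "real \<Rightarrow> (real \<times> real) set \<Rightarrow> (real \<times> real) set" where
  "shaking \<alpha> K = (\<Union>p\<in>lineD. fiber K \<alpha> p)"

end

theory Submission
  imports Defs
begin

lemma classP_basic:
  assumes "g \<in> classP"
  shows "a_of g < b_of g" "g (a_of g) = \<bar>a_of g\<bar>" "g (b_of g) = \<bar>b_of g\<bar>"
    "continuous_on UNIV g"
proof -
  define S where "S = {x. g x \<noteq> \<bar>x\<bar>}"
  have cg: "continuous_on UNIV g" using assms by (simp add: classP_def)
  then show "continuous_on UNIV g" .
  obtain R where R: "\<And>x. \<bar>x\<bar> \<ge> R \<Longrightarrow> g x = \<bar>x\<bar>" using assms by (auto simp: classP_def)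
  obtain x0 where x0: "x0 \<in> S" using assms by (auto simp: classP_def S_def)
  have bd: "S \<subseteq> {-R..R}" using R by (force simp: S_def)
  hence bda: "bdd_above S" and bdb: "bdd_below S" by (auto intro: bdd_above_mono bdd_below_mono)
  have op: "open S" unfolding S_def
    by (rule open_Collect_neq) (auto intro!: continuous_intros cg)
  have a: "a_of g = Inf S" and b: "b_of g = Sup S" by (simp_all add: a_of_def b_of_def S_def)
  obtain e where e: "e > 0" "ball x0 e \<subseteq> S" using op x0 openE by blast
  have "x0 - e/2 \<in> S" "x0 + e/2 \<in> S" using e by (auto simp: dist_real_def intro!: subsetD[OF e(2)])
  hence "Inf S \<le> x0 - e/2" "Sup S \<ge> x0 + e/2" using bda bdb by (auto intro: cInf_lower cSup_upper)
  then show "a_of g < b_of g" using a b e by linarith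
  show "g (a_of g) = \<bar>a_of g\<bar>"
  proof (rule ccontr)
    assume "g (a_of g) \<noteq> \<bar>a_of g\<bar>"
    hence "Inf S \<in> S" using a S_def by simp
    then obtain d where d: "d > 0" "ball (Inf S) d \<subseteq> S" using op openE by blast
    have "Inf S - d/2 \<in> S" using d by (auto simp: dist_real_def intro!: subsetD[OF d(2)])
    hence "Inf S \<le> Inf S - d/2" by (rule cInf_lower[OF _ bdb])
    thus False using d by simp
  qed
  show "g (b_of g) = \<bar>b_of g\<bar>"
  proof (rule ccontr)
    assume "g (b_of g) \<noteq> \<bar>b_of g\<bar>"
    hence "Sup S \<in> S" using b S_def by simp
    then obtain d where d: "d > 0" "ball (Sup S) d \<subseteq> S" using op openE by blast
    have "Sup S + d/2 \<in> S" using d by (auto simp: dist_real_def intro!: subsetD[OF d(2)])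
    hence "Sup S + d/2 \<le> Sup S" by (rule cSup_upper[OF _ bda])
    thus False using d by simp
  qed
qed

lemma phi_mono:
  fixes g :: "real \<Rightarrow> real"
  assumes cg: "continuous_on UNIV g"
    and dg: "\<forall>x\<in>{a<..<b}. g differentiable (at x)"
    and der: "\<forall>x\<in>{a<..<b}. deriv g x < \<alpha>"
    and xy: "a \<le> x" "x < y" "y \<le> b"
  shows "g y - \<alpha> * y < g x - \<alpha> * x"
proof -
  have "continuous_on {x..y} g" using cg continuous_on_subset by blast
  moreover have "\<And>z. x < z \<Longrightarrow> z < y \<Longrightarrow> g differentiable (at z)" using dg xy by auto
  ultimately obtain l z where lz: "x < z" "z < y" "DERIV g z :> l" "g y - g x = (y - x) * l"
    using MVT[OF xy(2)] by blast
  have "deriv g z = l" using lz(3) by (rule DERIV_imp_deriv)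
  hence "l < \<alpha>" using der lz xy by auto
  hence "(y - x) * l < (y - x) * \<alpha>" using xy by simp
  thus ?thesis using lz(4) by (simp add: algebra_simps)
qed


lemma vdir_eq: "vdir \<alpha> = (1 / sqrt (1 + \<alpha>\<^sup>2), \<alpha> / sqrt (1 + \<alpha>\<^sup>2))"
  by (simp add: vdir_def)

lemma fiber_image:
  assumes "{t. p + t *\<^sub>R vdir \<alpha> \<in> K} = {} \<or> (\<exists>L\<ge>0. {t. p + t *\<^sub>R vdir \<alpha> \<in> K} = {0..L})"
  shows "fiber K \<alpha> p = (\<lambda>t. p + t *\<^sub>R vdir \<alpha>) ` {t. p + t *\<^sub>R vdir \<alpha> \<in> K}"
proof (cases "{t. p + t *\<^sub>R vdir \<alpha> \<in> K} = {}")
  case True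
  hence "K \<inter> {p + t *\<^sub>R vdir \<alpha> | t. True} = {}" by auto
  thus ?thesis using True by (simp add: fiber_def)
next
  case False
  then obtain L where L: "L \<ge> 0" "{t. p + t *\<^sub>R vdir \<alpha> \<in> K} = {0..L}" using assms by blast
  have ne: "K \<inter> {p + t *\<^sub>R vdir \<alpha> | t. True} \<noteq> {}" using False by auto
  have fl: "fiber_len K \<alpha> p = L" using L by (simp add: fiber_len_def)
  have "closed_segment p (p + L *\<^sub>R vdir \<alpha>) = (\<lambda>t. p + t *\<^sub>R vdir \<alpha>) ` {0..L}"
  proof -
    have eq: "(1 - u) *\<^sub>R p + u *\<^sub>R (p + L *\<^sub>R vdir \<alpha>) = p + (u * L) *\<^sub>R vdir \<alpha>" for u
      by (simp add: algebra_simps)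
    have "(\<lambda>u. (1 - u) *\<^sub>R p + u *\<^sub>R (p + L *\<^sub>R vdir \<alpha>)) ` {0..1} = (\<lambda>t. p + t *\<^sub>R vdir \<alpha>) ` {0..L}"
    proof (intro equalityI subsetI)
      fix q assume "q \<in> (\<lambda>u. (1 - u) *\<^sub>R p + u *\<^sub>R (p + L *\<^sub>R vdir \<alpha>)) ` {0..1}"
      then obtain u where u: "u \<in> {0..1}" "q = p + (u * L) *\<^sub>R vdir \<alpha>" using eq by auto
      have "u * L \<in> {0..L}" using u L mult_left_le_one_le[of L u] by auto
      thus "q \<in> (\<lambda>t. p + t *\<^sub>R vdir \<alpha>) ` {0..L}" using u by auto
    next
      fix q assume "q \<in> (\<lambda>t. p + t *\<^sub>R vdir \<alpha>) ` {0..L}"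
      then obtain t where t: "t \<in> {0..L}" "q = p + t *\<^sub>R vdir \<alpha>" by auto
      show "q \<in> (\<lambda>u. (1 - u) *\<^sub>R p + u *\<^sub>R (p + L *\<^sub>R vdir \<alpha>)) ` {0..1}"
      proof (cases "L = 0")
        case True
        hence "q = (\<lambda>u. (1 - u) *\<^sub>R p + u *\<^sub>R (p + L *\<^sub>R vdir \<alpha>)) 0" using t by simp
        thus ?thesis by force
      next
        case False
        hence "q = (\<lambda>u. (1 - u) *\<^sub>R p + u *\<^sub>R (p + L *\<^sub>R vdir \<alpha>)) (t / L)" using t eq by simp
        moreover have "t / L \<in> {0..1}" using t L False by auto
        ultimately show ?thesis by blast
      qed
    qed
    thus ?thesis by (simp add: closed_segment_image_interval)
  qed
  thus ?thesis using ne fl L by (simp add: fiber_def)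
qed

lemma shaking_eq:
  assumes a0: "0 \<le> \<alpha>"
    and H: "\<And>s. {t. (s, -s) + t *\<^sub>R vdir \<alpha> \<in> K} = {} \<or> (\<exists>L\<ge>0. {t. (s, -s) + t *\<^sub>R vdir \<alpha> \<in> K} = {0..L})"
  shows "shaking \<alpha> K = K"
proof -
  have fp: "fiber K \<alpha> p = (\<lambda>t. p + t *\<^sub>R vdir \<alpha>) ` {t. p + t *\<^sub>R vdir \<alpha> \<in> K}" if "p \<in> lineD" for p
  proof -
    have "p = (fst p, - fst p)" using that by (cases p) (simp add: lineD_def)
    thus ?thesis using fiber_image H by metis
  qed
  show ?thesis
  proof (intro equalityI subsetI)
    fix q assume "q \<in> shaking \<alpha> K"
    then obtain p where "p \<in> lineD" "q \<in> fiber K \<alpha> p" by (auto simp: shaking_def)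
    thus "q \<in> K" using fp by auto
  next
    fix q assume qK: "q \<in> K"
    obtain x y where q: "q = (x, y)" by (cases q)
    define c where "c = 1 / sqrt (1 + \<alpha>\<^sup>2)"
    have c0: "c > 0" unfolding c_def by (simp add: add_pos_nonneg)
    have v: "vdir \<alpha> = (c, c * \<alpha>)" by (simp add: vdir_def c_def)
    define t where "t = (x + y) / (c * (1 + \<alpha>))"
    define s where "s = x - t * c"
    have tc: "t * c * (1 + \<alpha>) = x + y" using c0 a0 by (simp add: t_def)
    have eq: "(s, -s) + t *\<^sub>R vdir \<alpha> = q"
      using tc by (simp add: v q s_def algebra_simps)
    have "(s, -s) \<in> lineD" by (simp add: lineD_def)
    moreover have "q \<in> fiber K \<alpha> (s, -s)" using fp[OF calculation] eq qK by force
    ultimately show "q \<in> shaking \<alpha> K" by (auto simp: shaking_def)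
  qed
qed


lemma mem_down:
  fixes g :: "real \<Rightarrow> real"
  assumes a0: "a < 0" and ga: "g a = - a"
    and phi: "\<And>x y. a \<le> x \<Longrightarrow> x \<le> y \<Longrightarrow> y \<le> b \<Longrightarrow> g y - \<alpha> * y \<le> g x - \<alpha> * x"
    and al: "0 \<le> \<alpha>" "\<alpha> < 1"
    and m: "a \<le> s + u" "s + u \<le> b" "\<bar>s + u\<bar> \<le> - s + \<alpha> * u" "- s + \<alpha> * u \<le> g (s + u)"
  shows "0 \<le> u" "a \<le> s"
    "\<And>u'. 0 \<le> u' \<Longrightarrow> u' \<le> u \<Longrightarrow> a \<le> s + u' \<and> s + u' \<le> b \<and> 0 \<le> - s + \<alpha> * u' \<and> \<bar>s + u'\<bar> \<le> - s + \<alpha> * u' \<and> - s + \<alpha> * u' \<le> g (s + u')"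
proof -
  show u0: "0 \<le> u"
  proof (rule ccontr)
    assume "\<not> 0 \<le> u"
    hence "(1 + \<alpha>) * u < 0" using al by (simp add: mult_pos_neg)
    thus False using m(3) by (simp add: algebra_simps abs_if split: if_splits)
  qed
  show as: "a \<le> s"
  proof (rule ccontr)
    assume sa: "\<not> a \<le> s"
    have "g (s + u) - \<alpha> * (s + u) \<le> g a - \<alpha> * a" using phi[of a "s+u"] m by simp
    hence "- s - \<alpha> * s \<le> - a - \<alpha> * a" using m(4) ga by (simp add: algebra_simps)
    hence "(1 + \<alpha>) * a \<le> (1 + \<alpha>) * s" by (simp add: algebra_simps)
    hence "a \<le> s" using al by simp
    thus False using sa by simp
  qed
  fix u' assume u': "0 \<le> u'" "u' \<le> u"
  have "g (s + u) - \<alpha> * (s + u) \<le> g (s + u') - \<alpha> * (s + u')" using phi[of "s+u'" "s+u"] m u' as by simp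
  hence g': "- s + \<alpha> * u' \<le> g (s + u')" using m(4) by (simp add: algebra_simps)
  have p1: "0 \<le> (1 + \<alpha>) * u'" using u' al by simp
  have p2: "0 \<le> (1 - \<alpha>) * (u - u')" using u' al by simp
  have ab: "\<bar>s + u'\<bar> \<le> - s + \<alpha> * u'"
  proof (cases "s + u' \<le> 0")
    case True thus ?thesis using p1 by (simp add: algebra_simps)
  next
    case False
    hence "s + u \<le> - s + \<alpha> * u" using m(3) u' by simp
    thus ?thesis using False p2 by (simp add: algebra_simps)
  qed
  show "a \<le> s + u' \<and> s + u' \<le> b \<and> 0 \<le> - s + \<alpha> * u' \<and> \<bar>s + u'\<bar> \<le> - s + \<alpha> * u' \<and> - s + \<alpha> * u' \<le> g (s + u')"
    using ab g' as u' m(2) by auto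
qed


theorem lemma4p4:
  fixes g :: "real \<Rightarrow> real" and \<alpha> :: real
  assumes "g \<in> classP"
    and "\<forall>x\<in>{a_of g<..<b_of g}. g differentiable (at x)"
    and "continuous_on {a_of g<..<b_of g} (deriv g)"
    and "0 \<le> \<alpha>" and "\<alpha> < 1"
    and "\<forall>x\<in>{a_of g<..<b_of g}. deriv g x < \<alpha>"
  shows "shaking \<alpha> (gr g) = gr g"
proof -
  define a where "a = a_of g"
  define b where "b = b_of g"
  note B = classP_basic[OF assms(1), folded a_def b_def]
  have cg: "continuous_on UNIV g" by (rule B(4))
  have phis: "g y - \<alpha> * y < g x - \<alpha> * x" if "a \<le> x" "x < y" "y \<le> b" for x y
    using phi_mono[OF cg assms(2)[folded a_def b_def] assms(6)[folded a_def b_def] that] .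
  have phi: "g y - \<alpha> * y \<le> g x - \<alpha> * x" if "a \<le> x" "x \<le> y" "y \<le> b" for x y
    using phis[of x y] that by (cases "x = y") auto
  have a0: "a < 0"
  proof (rule ccontr)
    assume "\<not> a < 0"
    hence "g b - \<alpha> * b < g a - \<alpha> * a" "g a = a" "g b = b" using phis[of a b] B by auto
    hence "(1 - \<alpha>) * b < (1 - \<alpha>) * a" by (simp add: algebra_simps)
    thus False using B(1) assms(5) by simp
  qed
  have ga: "g a = - a" using B(2) a0 by simp
  define c where "c = 1 / sqrt (1 + \<alpha>\<^sup>2)"
  have c0: "c > 0" unfolding c_def by (simp add: add_pos_nonneg)
  have v: "vdir \<alpha> = (c, c * \<alpha>)" by (simp add: vdir_def c_def)
  show ?thesis
  proof (rule shaking_eq[OF assms(4)])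
    fix s
    define P where "P u \<longleftrightarrow> a \<le> s + u \<and> s + u \<le> b \<and> 0 \<le> - s + \<alpha> * u \<and> \<bar>s + u\<bar> \<le> - s + \<alpha> * u \<and> - s + \<alpha> * u \<le> g (s + u)" for u
    define T where "T = {t. (s, -s) + t *\<^sub>R vdir \<alpha> \<in> gr g}"
    have TP: "T = {t. P (t * c)}"
      by (simp add: T_def P_def gr_def v a_def b_def algebra_simps)
    show "T = {} \<or> (\<exists>L\<ge>0. T = {0..L})"
    proof (cases "T = {}")
      case False
      have bdd: "bdd_above T"
      proof
        fix t assume "t \<in> T"
        hence "t * c \<le> b - s" by (simp add: TP P_def)
        thus "t \<le> (b - s) / c" using c0 by (simp add: pos_le_divide_eq)
      qed
      have gc: "continuous_on UNIV (\<lambda>t. g (s + t * c))"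
        by (rule continuous_on_compose2[OF cg]) (auto intro!: continuous_intros)
      have cl: "closed T" unfolding TP P_def
        by (intro closed_Collect_conj closed_Collect_le continuous_intros gc)
      define L where "L = Sup T"
      have LT: "L \<in> T" using closed_contains_Sup[OF False bdd cl] by (simp add: L_def)
      hence PL: "P (L * c)" by (simp add: TP)
      note D = mem_down[OF a0 ga phi assms(4,5), where s=s and u="L * c"]
      have L0: "0 \<le> L" using D(1) PL c0 by (auto simp: P_def zero_le_mult_iff)
      have "T = {0..L}"
      proof (intro equalityI subsetI)
        fix t assume tT: "t \<in> T"
        hence "t \<le> L" using bdd by (simp add: L_def cSup_upper)
        moreover have "0 \<le> t * c" using mem_down(1)[OF a0 ga phi assms(4,5), where s=s and u="t * c"] tT
          by (auto simp: TP P_def)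
        ultimately show "t \<in> {0..L}" using c0 by (simp add: zero_le_mult_iff)
      next
        fix t assume "t \<in> {0..L}"
        hence "0 \<le> t * c" "t * c \<le> L * c" using c0 by auto
        thus "t \<in> T" using D(3) PL by (auto simp: TP P_def)
      qed
      thus ?thesis using L0 by blast
    qed simp
  qed
qed

end
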